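(* Let $\Sigma$ be an alphabet of size $d\ge 2$, let $\delta\in[0,1/d)$, and let $N$ be a $\delta$-upper bounded noise matrix on $\Sigma$. Let $\delta'=f(\delta)$. There exists a stochastic matrix $P=P(N,\delta)$ such that, for any protocol $\mathcal{A}$, the simulation of $\mathcal{A}$ with artificial noise $P$ under noise $N$ has the same distribution as $\mathcal{A}$ run under the $\delta'$-uniform noise matrix. In particular, for every displayed message $i\in\Sigma$, the message obtained by applying $N$ and then $P$ equals $j$ with probability $T_{i,j}$, where $T$ is the $\delta'$-uniform matrix.
   Context: A $d\times d$ matrix is stochastic if its entries are non-negative and each row sums to $1$. For $\delta\in[0,1/d]$, a stochastic matrix $N$ indexed by $\Sigma$ is: - $\delta$-upper bounded if $N_{\sigma,\sigma}\ge1-(d-1)\delta$ for all $\sigma$ and $N_{\sigma,\sigma'}\le\delta$ for all $\sigma\ne\sigma'$; - $\delta$-uniform if $N_{\sigma,\sigma}=1-(d-1)\delta$ and $N_{\sigma,\sigma'}=\delta$ for all $\sigma\ne\sigma'$. Noise matrices act on messages: when a message $\sigma$ is observed through noise $N$, the observer receives $\sigma'$ with probability $N_{\sigma,\sigma'}$, independently across observations. Simulation of a protocol $\mathcal{A}$ with artificial noise $P$: in every round, each agent replaces every received message $i$ by a random $\sigma\in\Sigma$ with $\Pr(\sigma=j)=P_{ij}$, independently, and then applies $\mathcal{A}$ to the modified messages. The function $f:[0,1/d)\to\mathbb{R}$ is defined by $f(0)=0$ and, for $\delta\in(0,1/d)$, $$f(\delta)=\left(d+\frac{1}{2}\cdot\frac{1}{(d-1)^2}\cdot\frac{1-d\delta}{\delta}\right)^{-1}.$$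 *)

theory Defs
  imports Complex_Main
begin

text \<open>Noise matrices on a finite alphabet 'a (with d = CARD('a)) are
  represented as functions 'a => 'a => real; N i j is the probability that
  displayed message i is observed as j.\<close>

definition stochastic :: "('a::finite \<Rightarrow> 'a \<Rightarrow> real) \<Rightarrow> bool" where
  "stochastic N \<longleftrightarrow> (\<forall>i j. 0 \<le> N i j) \<and> (\<forall>i. (\<Sum>j\<in>UNIV. N i j) = 1)"

definition upper_bounded :: "real \<Rightarrow> ('a::finite \<Rightarrow> 'a \<Rightarrow> real) \<Rightarrow> bool" where
  "upper_bounded \<delta> N \<longleftrightarrow> stochastic N \<and>
     (\<forall>s. N s s \<ge> 1 - (real (card (UNIV :: 'a set)) - 1) * \<delta>) \<and>
     (\<forall>s s'. s \<noteq> s' \<longrightarrow> N s s' \<le> \<delta>)"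

definition uniform_noise :: "real \<Rightarrow> ('a::finite \<Rightarrow> 'a \<Rightarrow> real)" where
  "uniform_noise \<delta> = (\<lambda>s s'. if s = s' then 1 - (real (card (UNIV :: 'a set)) - 1) * \<delta> else \<delta>)"

definition compose_noise :: "('a::finite \<Rightarrow> 'a \<Rightarrow> real) \<Rightarrow> ('a \<Rightarrow> 'a \<Rightarrow> real) \<Rightarrow> ('a \<Rightarrow> 'a \<Rightarrow> real)" where
  "compose_noise N P = (\<lambda>i j. \<Sum>k\<in>UNIV. N i k * P k j)"

definition f_noise :: "nat \<Rightarrow> real \<Rightarrow> real" where
  "f_noise d \<delta> = (if \<delta> = 0 then 0 else
     inverse (real d + (1/2) * (1 / (real d - 1)^2) * ((1 - real d * \<delta>) / \<delta>)))"

end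

theory Submission imports Defs "HOL-Analysis.Analysis" begin

lemma solve_exists:
  fixes N :: "'a::finite \<Rightarrow> 'a \<Rightarrow> real"
  assumes inj: "\<And>y. (\<forall>i. (\<Sum>k\<in>UNIV. N i k * y k) = 0) \<Longrightarrow> (\<forall>k. y k = 0)"
  shows "\<exists>y. \<forall>i. (\<Sum>k\<in>UNIV. N i k * y k) = b i"
proof -
  define F where "F = (\<lambda>x::real^'a. \<chi> i. \<Sum>k\<in>UNIV. N i k * x$k)"
  have lin: "linear F"
    by (rule linearI) (simp_all add: F_def vec_eq_iff algebra_simps sum.distrib sum_distrib_left)
  have "inj F"
  proof (rule linear_injective_0[OF lin, THEN iffD2], intro allI impI)
    fix x assume "F x = 0"
    then have "\<forall>i. (\<Sum>k\<in>UNIV. N i k * (\<lambda>k. x$k) k) = 0" by (simp add: F_def vec_eq_iff)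
    then show "x = 0" using inj[of "\<lambda>k. x$k"] by (simp add: vec_eq_iff)
  qed
  then have "surj F" using linear_injective_imp_surjective[OF lin] by blast
  then obtain x where "F x = (\<chi> i. b i)" by (metis surjE)
  then show ?thesis by (intro exI[of _ "\<lambda>k. x$k"]) (simp add: F_def vec_eq_iff)
qed

lemma ex_argmin: "\<exists>i. \<forall>k. (y::'a::finite \<Rightarrow> real) i \<le> y k"
proof -
  have "Min (range y) \<in> range y" by (rule Min_in) auto
  then obtain i where "y i = Min (range y)" by (metis rangeE)
  then show ?thesis by (metis Min_le finite UNIV_I finite_imageI image_eqI)
qed

lemma ex_argmax: "\<exists>i. \<forall>k. (y::'a::finite \<Rightarrow> real) k \<le> y i"
  using ex_argmin[of "\<lambda>k. - y k"] by auto

lemma expand: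
  fixes N :: "'a::finite \<Rightarrow> 'a \<Rightarrow> real"
  assumes rs: "(\<Sum>k\<in>UNIV. N i k) = 1"
  shows "(\<Sum>k\<in>UNIV. N i k * y k) = y i + (\<Sum>k\<in>UNIV. N i k * (y k - y i))"
proof -
  have "(\<Sum>k\<in>UNIV. N i k * (y k - y i)) = (\<Sum>k\<in>UNIV. N i k * y k) - (\<Sum>k\<in>UNIV. N i k) * y i"
    by (simp add: sum_subtractf sum_distrib_right right_diff_distrib)
  then show ?thesis using rs by simp
qed

lemma min_principle:
  fixes N :: "'a::finite \<Rightarrow> 'a \<Rightarrow> real"
  assumes rs: "(\<Sum>k\<in>UNIV. N i k) = 1"
    and off: "\<And>k. k \<noteq> i \<Longrightarrow> N i k \<le> \<delta>"
    and mn: "\<And>k. y i \<le> y k"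
  shows "(\<Sum>k\<in>UNIV. N i k * y k) \<le> (1 - real CARD('a) * \<delta>) * y i + \<delta> * (\<Sum>k\<in>UNIV. y k)"
proof -
  have "(\<Sum>k\<in>UNIV. N i k * (y k - y i)) \<le> (\<Sum>k\<in>UNIV. \<delta> * (y k - y i))"
  proof (rule sum_mono)
    fix k show "N i k * (y k - y i) \<le> \<delta> * (y k - y i)"
      using off[of k] mn[of k] by (cases "k = i") (auto intro: mult_right_mono)
  qed
  also have "\<dots> = \<delta> * (\<Sum>k\<in>UNIV. y k) - real CARD('a) * \<delta> * y i"
    by (simp add: sum_distrib_left[symmetric] sum_subtractf algebra_simps)
  finally show ?thesis using expand[of N i y, OF rs] by (simp add: algebra_simps)
qed

lemma max_principle:
  fixes N :: "'a::finite \<Rightarrow> 'a \<Rightarrow> real"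
  assumes rs: "(\<Sum>k\<in>UNIV. N i k) = 1"
    and off: "\<And>k. k \<noteq> i \<Longrightarrow> N i k \<le> \<delta>"
    and mx: "\<And>k. y k \<le> y i"
  shows "(\<Sum>k\<in>UNIV. N i k * y k) \<ge> (1 - real CARD('a) * \<delta>) * y i + \<delta> * (\<Sum>k\<in>UNIV. y k)"
proof -
  have "(\<Sum>k\<in>UNIV. N i k * (y k - y i)) \<ge> (\<Sum>k\<in>UNIV. \<delta> * (y k - y i))"
  proof (rule sum_mono)
    fix k show "N i k * (y k - y i) \<ge> \<delta> * (y k - y i)"
      using off[of k] mx[of k] by (cases "k = i") (auto intro: mult_right_mono_neg)
  qed
  moreover have "(\<Sum>k\<in>UNIV. \<delta> * (y k - y i)) = \<delta> * (\<Sum>k\<in>UNIV. y k) - real CARD('a) * \<delta> * y i"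
    by (simp add: sum_distrib_left[symmetric] sum_subtractf algebra_simps)
  ultimately show ?thesis using expand[of N i y, OF rs] by (simp add: algebra_simps)
qed

theorem theorem8:
  fixes N :: "'a::finite \<Rightarrow> 'a \<Rightarrow> real" and \<delta> :: real
  assumes "card (UNIV :: 'a set) \<ge> 2"
    and "0 \<le> \<delta>" and "\<delta> < 1 / real (card (UNIV :: 'a set))"
    and "upper_bounded \<delta> N"
  shows "\<exists>P. stochastic P \<and>
           compose_noise N P = uniform_noise (f_noise (card (UNIV :: 'a set)) \<delta>)"
proof -
  define d where "d = real CARD('a)"
  have d2: "d \<ge> 2" using assms(1) by (simp add: d_def)
  have dpos: "d > 0" using d2 by simp
  have ddel: "d * \<delta> < 1" using assms(3) dpos by (simp add: d_def field_simps)
  have rs: "\<And>i. (\<Sum>k\<in>UNIV. N i k) = 1" and off: "\<And>i k. k \<noteq> i \<Longrightarrow> N i k \<le> \<delta>"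
    using assms(4) unfolding upper_bounded_def stochastic_def by auto
  have minp: "\<And>y i. (\<And>k. y i \<le> y k) \<Longrightarrow> (\<Sum>k\<in>UNIV. N i k * y k) \<le> (1 - d * \<delta>) * y i + \<delta> * (\<Sum>k\<in>UNIV. y k)"
    unfolding d_def by (rule min_principle[OF rs off]) auto
  have maxp: "\<And>y i. (\<And>k. y k \<le> y i) \<Longrightarrow> (\<Sum>k\<in>UNIV. N i k * y k) \<ge> (1 - d * \<delta>) * y i + \<delta> * (\<Sum>k\<in>UNIV. y k)"
    unfolding d_def by (rule max_principle[OF rs off]) auto
  have inj: "\<forall>k. y k = 0" if hy: "\<forall>i. (\<Sum>k\<in>UNIV. N i k * y k) = 0" for y
  proof -
    obtain m where m: "\<And>k. y m \<le> y k" using ex_argmin by blast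
    obtain M where M: "\<And>k. y k \<le> y M" using ex_argmax by blast
    have "(1 - d * \<delta>) * y m + \<delta> * (\<Sum>k\<in>UNIV. y k) \<ge> 0" using minp[of y m] m hy by auto
    moreover have "(1 - d * \<delta>) * y M + \<delta> * (\<Sum>k\<in>UNIV. y k) \<le> 0" using maxp[of y M] M hy by auto
    ultimately have "(1 - d * \<delta>) * y M \<le> (1 - d * \<delta>) * y m" by linarith
    then have "y M \<le> y m" using ddel by simp
    then have c: "\<And>k. y k = y m" using m M by (meson order_antisym order_trans)
    have "(\<Sum>k\<in>UNIV. N m k * y k) = (\<Sum>k\<in>UNIV. N m k * y m)"
      by (intro sum.cong refl) (metis c)
    also have "\<dots> = (\<Sum>k\<in>UNIV. N m k) * y m" by (simp add: sum_distrib_right)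
    finally have "(\<Sum>k\<in>UNIV. N m k * y k) = (\<Sum>k\<in>UNIV. N m k) * y m" .
    then have "y m = 0" using hy rs by simp
    then show ?thesis by (metis c)
  qed
  have "\<forall>j. \<exists>y. \<forall>i. (\<Sum>k\<in>UNIV. N i k * y k) = (if i = j then 1 else 0)"
    by (intro allI solve_exists) (use inj in blast)
  from choice[OF this] obtain Y where "\<forall>j i. (\<Sum>k\<in>UNIV. N i k * Y j k) = (if i = j then 1 else 0)"
    by blast
  then have Y: "\<And>j i. (\<Sum>k\<in>UNIV. N i k * Y j k) = (if i = j then 1 else 0)" by blast
  have Ybound: "(1 - d * \<delta>) * Y j i \<ge> - \<delta> * d" for j i
  proof -
    define y where "y = Y j"
    obtain m where m: "\<And>k. y m \<le> y k" using ex_argmin by blast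
    obtain M where M: "\<And>k. y k \<le> y M" using ex_argmax by blast
    define s where "s = (\<Sum>k\<in>UNIV. y k)"
    have "(1 - d * \<delta>) * y m + \<delta> * s \<ge> 0"
      using minp[of y m] m Y[of m j] unfolding y_def s_def by (auto split: if_splits)
    moreover have "(1 - d * \<delta>) * y M + \<delta> * s \<le> 1"
      using maxp[of y M] M Y[of M j] unfolding y_def s_def by (auto split: if_splits)
    moreover have "s \<le> d * y M"
    proof -
      have "s \<le> (\<Sum>k\<in>(UNIV::'a set). y M)" unfolding s_def by (rule sum_mono) (use M in auto)
      then show ?thesis by (simp add: d_def)
    qed
    moreover have "(1 - d * \<delta>) * y i \<ge> (1 - d * \<delta>) * y m"
      using m[of i] ddel by simp
    ultimately have A: "(1 - d * \<delta>) * y i \<ge> - \<delta> * s" and F2: "(1 - d * \<delta>) * y M + \<delta> * s \<le> 1"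
      and F3: "s \<le> d * y M" by linarith+
    have "(1 - d * \<delta>) * s \<le> (1 - d * \<delta>) * (d * y M)" using F3 ddel by (simp add: mult_left_mono)
    also have "\<dots> = d * ((1 - d * \<delta>) * y M)" by (simp add: algebra_simps)
    also have "\<dots> \<le> d * (1 - \<delta> * s)" using F2 dpos by (simp add: mult_left_mono)
    finally have B: "(1 - d * \<delta>) * s \<le> d * (1 - \<delta> * s)" .
    from B have "s \<le> d" by (simp add: algebra_simps)
    then have "- \<delta> * s \<ge> - \<delta> * d" using assms(2) by (simp add: mult_left_mono)
    with A show ?thesis unfolding y_def by linarith
  qed
  define e where "e = f_noise CARD('a) \<delta>"
  have e_nonneg: "e \<ge> 0" and e1: "1 - d * e > 0" and Pnn: "\<And>j i. (1 - d * e) * Y j i + e \<ge> 0"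
  proof -
    have "e \<ge> 0 \<and> 1 - d * e > 0 \<and> (\<forall>j i. (1 - d * e) * Y j i + e \<ge> 0)"
    proof (cases "\<delta> = 0")
      case True
      then show ?thesis using Ybound by (simp add: e_def f_noise_def)
    next
      case False
      then have dp: "\<delta> > 0" using assms(2) by simp
      define A where "A = (1/2) * (1 / (d - 1)^2) * ((1 - d * \<delta>) / \<delta>)"
      have Ap: "A > 0" unfolding A_def using d2 dp ddel by simp
      have ee: "e = 1 / (d + A)" using False unfolding e_def f_noise_def A_def d_def
        by (simp add: inverse_eq_divide)
      have one: "1 - d * e = A * e" unfolding ee using Ap dpos by (simp add: field_simps)
      have "\<And>j i. A * Y j i \<ge> -1"
      proof -
        fix j i
        have yb: "Y j i \<ge> - \<delta> * d / (1 - d * \<delta>)" using Ybound[of j i] ddel by (simp add: field_simps)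
        have "A * Y j i \<ge> A * (- \<delta> * d / (1 - d * \<delta>))" using yb Ap by (intro mult_left_mono) auto
        also have "A * (- \<delta> * d / (1 - d * \<delta>)) = - d / (2 * (d - 1)^2)"
          unfolding A_def using dp ddel d2 by (simp add: field_simps)
        also have "\<dots> \<ge> -1"
        proof -
          have "(2*d-1)*(d-2) \<ge> 0" using d2 by (intro mult_nonneg_nonneg) auto
          moreover have "(2*d-1)*(d-2) = 2 * (d - 1)^2 - d" by (simp add: power2_eq_square algebra_simps)
          ultimately have "d \<le> 2 * (d - 1)^2" by linarith
          then show ?thesis using d2 by (simp add: field_simps)
        qed
        finally show "A * Y j i \<ge> -1" .
      qed
      moreover have "e > 0" unfolding ee using Ap dpos by simp
      moreover have "(1 - d * e) * Y j i + e = e * (A * Y j i + 1)" for j i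
        by (simp add: one algebra_simps)
      ultimately have AY: "\<And>j i. A * Y j i \<ge> -1" and ep: "e > 0"
        and fac: "\<And>j i. (1 - d * e) * Y j i + e = e * (A * Y j i + 1)" by blast+
      have "\<forall>j i. (1 - d * e) * Y j i + e \<ge> 0"
      proof (intro allI)
        fix j i
        have "A * Y j i + 1 \<ge> 0" using AY[of j i] by linarith
        then show "(1 - d * e) * Y j i + e \<ge> 0" unfolding fac using ep by simp
      qed
      then show ?thesis using one Ap ep by simp
    qed
    then show "e \<ge> 0" "1 - d * e > 0" "\<And>j i. (1 - d * e) * Y j i + e \<ge> 0" by auto
  qed
  define P where "P = (\<lambda>i j. (1 - d * e) * Y j i + e)"
  have zsum: "(\<Sum>j\<in>UNIV. Y j i) = 1" for i
  proof -
    define z where "z = (\<lambda>k. (\<Sum>j\<in>UNIV. Y j k) - 1)"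
    have "\<forall>i. (\<Sum>k\<in>UNIV. N i k * z k) = 0"
    proof
      fix i
      have "(\<Sum>k\<in>UNIV. N i k * z k) = (\<Sum>j\<in>UNIV. (\<Sum>k\<in>UNIV. N i k * Y j k)) - (\<Sum>k\<in>UNIV. N i k)"
      proof -
        have "(\<Sum>k\<in>UNIV. N i k * z k) = (\<Sum>k\<in>UNIV. (\<Sum>j\<in>UNIV. N i k * Y j k)) - (\<Sum>k\<in>UNIV. N i k)"
          unfolding z_def by (simp add: right_diff_distrib sum_subtractf sum_distrib_left)
        also have "(\<Sum>k\<in>UNIV. (\<Sum>j\<in>UNIV. N i k * Y j k)) = (\<Sum>j\<in>UNIV. (\<Sum>k\<in>UNIV. N i k * Y j k))"
          by (rule sum.swap)
        finally show ?thesis .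
      qed
      also have "\<dots> = 0" by (simp add: Y rs)
      finally show "(\<Sum>k\<in>UNIV. N i k * z k) = 0" .
    qed
    then have "\<forall>k. z k = 0" by (rule inj)
    then show ?thesis unfolding z_def by simp
  qed
  have "stochastic P"
    unfolding stochastic_def P_def
  proof (intro conjI allI)
    fix i j show "0 \<le> (1 - d * e) * Y j i + e" by (rule Pnn)
  next
    fix i
    have "(\<Sum>j\<in>UNIV. (1 - d * e) * Y j i + e) = (1 - d * e) * (\<Sum>j\<in>UNIV. Y j i) + d * e"
      by (simp add: sum.distrib sum_distrib_left d_def)
    then show "(\<Sum>j\<in>UNIV. (1 - d * e) * Y j i + e) = 1" by (simp add: zsum)
  qed
  moreover have "compose_noise N P = uniform_noise e"
  proof (intro ext)
    fix i j
    have "compose_noise N P i j = (1 - d * e) * (\<Sum>k\<in>UNIV. N i k * Y j k) + e * (\<Sum>k\<in>UNIV. N i k)"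
    proof -
      have "compose_noise N P i j = (\<Sum>k\<in>UNIV. (1 - d * e) * (N i k * Y j k) + e * N i k)"
        unfolding compose_noise_def P_def by (rule sum.cong) (auto simp: algebra_simps)
      also have "\<dots> = (1 - d * e) * (\<Sum>k\<in>UNIV. N i k * Y j k) + e * (\<Sum>k\<in>UNIV. N i k)"
        by (simp only: sum.distrib sum_distrib_left)
      finally show ?thesis .
    qed
    also have "\<dots> = uniform_noise e i j"
      by (simp add: Y rs uniform_noise_def d_def algebra_simps)
    finally show "compose_noise N P i j = uniform_noise e i j" .
  qed
  ultimately show ?thesis unfolding e_def by blast
qed

end
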